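(* Let $D\ge1$, let $Q_D$ be the $D$-dimensional hypercube on $X=\{0,1\}^D$ with adjacency matrix $A$, and let $B$ be a real matrix with rows and columns indexed by $X$. Then $B$ is $A$-like if and only if $B$ commutes with $A$ and $$\alpha^*_i\alpha^*_jB-\alpha^*_iB\alpha^*_j-\alpha^*_jB\alpha^*_i+B\alpha^*_i\alpha^*_j=0\qquad(1\le i<j\le D).$$
   Context: $Q_D$ is the graph with vertex set $X=\{0,1\}^D$ (sequences $x=(x_1,\ldots,x_D)$), two vertices adjacent iff they differ in exactly one coordinate. A matrix $B$ is $A$-like if $BA=AB$ and $B_{xy}=0$ for all $x,y\in X$ that are neither equal nor adjacent. For $1\le i\le D$, $\alpha^*_i$ is the diagonal matrix with $(x,x)$-entry $1$ if $x_i=0$ and $-1$ if $x_i=1$. *)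

theory Defs
  imports Complex_Main
begin

text \<open>Vertices of Q_D: x :: nat \<Rightarrow> bool, with coordinates x 1, ..., x D
  (True = 1, False = 0), and x i = False outside {1..D}.
  Matrices indexed by X are functions X \<Rightarrow> X \<Rightarrow> real; only entries on X \<times> X matter.\<close>

definition hypercube :: "nat \<Rightarrow> (nat \<Rightarrow> bool) set" where
  "hypercube D = {x. \<forall>i. x i \<longrightarrow> i \<in> {1..D}}"

definition hc_adjacent :: "nat \<Rightarrow> (nat \<Rightarrow> bool) \<Rightarrow> (nat \<Rightarrow> bool) \<Rightarrow> bool" where
  "hc_adjacent D x y \<longleftrightarrow> card {i \<in> {1..D}. x i \<noteq> y i} = 1"

definition hc_adj_matrix :: "nat \<Rightarrow> (nat \<Rightarrow> bool) \<Rightarrow> (nat \<Rightarrow> bool) \<Rightarrow> real" where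
  "hc_adj_matrix D x y = (if hc_adjacent D x y then 1 else 0)"

definition mmult :: "nat \<Rightarrow> ((nat \<Rightarrow> bool) \<Rightarrow> (nat \<Rightarrow> bool) \<Rightarrow> real)
    \<Rightarrow> ((nat \<Rightarrow> bool) \<Rightarrow> (nat \<Rightarrow> bool) \<Rightarrow> real) \<Rightarrow> (nat \<Rightarrow> bool) \<Rightarrow> (nat \<Rightarrow> bool) \<Rightarrow> real" where
  "mmult D M N x y = (\<Sum>z\<in>hypercube D. M x z * N z y)"

definition mat_eq_on :: "nat \<Rightarrow> ((nat \<Rightarrow> bool) \<Rightarrow> (nat \<Rightarrow> bool) \<Rightarrow> real)
    \<Rightarrow> ((nat \<Rightarrow> bool) \<Rightarrow> (nat \<Rightarrow> bool) \<Rightarrow> real) \<Rightarrow> bool" where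
  "mat_eq_on D M N \<longleftrightarrow> (\<forall>x\<in>hypercube D. \<forall>y\<in>hypercube D. M x y = N x y)"

definition alpha_star :: "nat \<Rightarrow> (nat \<Rightarrow> bool) \<Rightarrow> (nat \<Rightarrow> bool) \<Rightarrow> real" where
  "alpha_star i x y = (if x = y then (if x i then -1 else 1) else 0)"

definition A_like :: "nat \<Rightarrow> ((nat \<Rightarrow> bool) \<Rightarrow> (nat \<Rightarrow> bool) \<Rightarrow> real) \<Rightarrow> bool" where
  "A_like D B \<longleftrightarrow>
     mat_eq_on D (mmult D B (hc_adj_matrix D)) (mmult D (hc_adj_matrix D) B) \<and>
     (\<forall>x\<in>hypercube D. \<forall>y\<in>hypercube D. x \<noteq> y \<and> \<not> hc_adjacent D x y \<longrightarrow> B x y = 0)"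

end

theory Submission
  imports Defs
begin

definition sg :: "nat \<Rightarrow> (nat \<Rightarrow> bool) \<Rightarrow> real" where
  "sg i x = (if x i then -1 else 1)"

lemma alpha_eq: "alpha_star i x z = (if x = z then sg i x else 0)"
  by (simp add: alpha_star_def sg_def)

lemma fin_hc: "finite (hypercube D)"
proof -
  have "hypercube D \<subseteq> (\<lambda>S. \<lambda>i. i \<in> S) ` Pow {1..D}"
  proof
    fix x assume "x \<in> hypercube D"
    hence "x = (\<lambda>i. i \<in> {i. x i})" "{i. x i} \<in> Pow {1..D}"
      by (auto simp: hypercube_def)
    thus "x \<in> (\<lambda>S. \<lambda>i. i \<in> S) ` Pow {1..D}" by blast
  qed
  thus ?thesis by (rule finite_subset) simp
qed

lemma L1: "x \<in> hypercube D \<Longrightarrow> mmult D (alpha_star i) M x y = sg i x * M x y"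
proof -
  assume x: "x \<in> hypercube D"
  have "mmult D (alpha_star i) M x y = (\<Sum>z\<in>hypercube D. if x = z then sg i x * M x y else 0)"
    unfolding mmult_def alpha_eq by (rule sum.cong) auto
  thus ?thesis using x by (simp add: fin_hc)
qed

lemma L2: "y \<in> hypercube D \<Longrightarrow> mmult D M (alpha_star i) x y = M x y * sg i y"
proof -
  assume y: "y \<in> hypercube D"
  have "mmult D M (alpha_star i) x y = (\<Sum>z\<in>hypercube D. if z = y then M x y * sg i y else 0)"
    unfolding mmult_def alpha_eq by (rule sum.cong) auto
  thus ?thesis using y by (simp add: fin_hc)
qed

lemma L3: "x \<in> hypercube D \<Longrightarrow>
  mmult D (mmult D (alpha_star i) (alpha_star j)) B x y = sg i x * sg j x * B x y"
proof -
  assume x: "x \<in> hypercube D"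
  have "mmult D (mmult D (alpha_star i) (alpha_star j)) B x y
     = (\<Sum>z\<in>hypercube D. if x = z then sg i x * sg j x * B x y else 0)"
    unfolding mmult_def[of D "mmult D _ _"]
    by (rule sum.cong) (auto simp: L1[OF x] alpha_eq)
  thus ?thesis using x by (simp add: fin_hc)
qed

lemma expr: "x \<in> hypercube D \<Longrightarrow> y \<in> hypercube D \<Longrightarrow>
          mmult D (mmult D (alpha_star i) (alpha_star j)) B x y
          - mmult D (mmult D (alpha_star i) B) (alpha_star j) x y
          - mmult D (mmult D (alpha_star j) B) (alpha_star i) x y
          + mmult D (mmult D B (alpha_star i)) (alpha_star j) x y
     = B x y * (sg i x - sg i y) * (sg j x - sg j y)"
  by (simp add: L1 L2 L3 algebra_simps)

lemma prodz: "(B x y * (sg i x - sg i y) * (sg j x - sg j y) = 0) \<longleftrightarrow>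
   (B x y = 0 \<or> x i = y i \<or> x j = y j)"
  by (auto simp: sg_def split: if_splits)

lemma key:
  assumes x: "x \<in> hypercube D" and y: "y \<in> hypercube D"
  shows "(x \<noteq> y \<and> \<not> hc_adjacent D x y) \<longleftrightarrow>
     (\<exists>i j. 1 \<le> i \<and> i < j \<and> j \<le> D \<and> x i \<noteq> y i \<and> x j \<noteq> y j)"
proof -
  let ?S = "{i \<in> {1..D}. x i \<noteq> y i}"
  have fS: "finite ?S" by simp
  have ne: "x \<noteq> y \<longleftrightarrow> ?S \<noteq> {}"
  proof
    assume "x \<noteq> y"
    then obtain k where "x k \<noteq> y k" by auto
    hence "k \<in> {1..D}" using x y by (auto simp: hypercube_def)
    with \<open>x k \<noteq> y k\<close> show "?S \<noteq> {}" by blast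
  qed auto
  show ?thesis
  proof
    assume "x \<noteq> y \<and> \<not> hc_adjacent D x y"
    hence "?S \<noteq> {}" "card ?S \<noteq> 1" using ne by (auto simp: hc_adjacent_def)
    then obtain a where a: "a \<in> ?S" by blast
    have "?S - {a} \<noteq> {}"
    proof
      assume "?S - {a} = {}"
      hence "?S = {a}" using a by blast
      thus False using \<open>card ?S \<noteq> 1\<close> by simp
    qed
    then obtain b where "b \<in> ?S" "b \<noteq> a" by blast
    hence "a \<in> ?S" "b \<in> ?S" "a \<noteq> b" using a by auto
    then show "\<exists>i j. 1 \<le> i \<and> i < j \<and> j \<le> D \<and> x i \<noteq> y i \<and> x j \<noteq> y j"
    proof (cases "a < b")
      case True thus ?thesis using \<open>a \<in> ?S\<close> \<open>b \<in> ?S\<close> by auto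
    next
      case False hence "b < a" using \<open>a \<noteq> b\<close> by simp
      thus ?thesis using \<open>a \<in> ?S\<close> \<open>b \<in> ?S\<close> by auto
    qed
  next
    assume "\<exists>i j. 1 \<le> i \<and> i < j \<and> j \<le> D \<and> x i \<noteq> y i \<and> x j \<noteq> y j"
    then obtain i j where ij: "1 \<le> i" "i < j" "j \<le> D" "x i \<noteq> y i" "x j \<noteq> y j" by blast
    hence "{i, j} \<subseteq> ?S" by auto
    hence "card {i,j} \<le> card ?S" using fS by (rule card_mono[rotated])
    hence "card ?S \<ge> 2" using ij by simp
    thus "x \<noteq> y \<and> \<not> hc_adjacent D x y" using ij by (auto simp: hc_adjacent_def)
  qed
qed

theorem proposition7p3:
  fixes D :: nat and B :: "(nat \<Rightarrow> bool) \<Rightarrow> (nat \<Rightarrow> bool) \<Rightarrow> real"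
  assumes "D \<ge> 1"
  shows "A_like D B \<longleftrightarrow>
    mat_eq_on D (mmult D B (hc_adj_matrix D)) (mmult D (hc_adj_matrix D) B) \<and>
    (\<forall>i j. 1 \<le> i \<and> i < j \<and> j \<le> D \<longrightarrow>
       (\<forall>x\<in>hypercube D. \<forall>y\<in>hypercube D.
          mmult D (mmult D (alpha_star i) (alpha_star j)) B x y
          - mmult D (mmult D (alpha_star i) B) (alpha_star j) x y
          - mmult D (mmult D (alpha_star j) B) (alpha_star i) x y
          + mmult D (mmult D B (alpha_star i)) (alpha_star j) x y = 0))"
proof -
  let ?H = "hypercube D"
  have P1: "(\<forall>x\<in>?H. \<forall>y\<in>?H.
          mmult D (mmult D (alpha_star i) (alpha_star j)) B x y
          - mmult D (mmult D (alpha_star i) B) (alpha_star j) x y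
          - mmult D (mmult D (alpha_star j) B) (alpha_star i) x y
          + mmult D (mmult D B (alpha_star i)) (alpha_star j) x y = 0)
     \<longleftrightarrow> (\<forall>x\<in>?H. \<forall>y\<in>?H. B x y = 0 \<or> x i = y i \<or> x j = y j)" for i j
  proof -
    have "\<And>x y. x \<in> ?H \<Longrightarrow> y \<in> ?H \<Longrightarrow>
          (mmult D (mmult D (alpha_star i) (alpha_star j)) B x y
          - mmult D (mmult D (alpha_star i) B) (alpha_star j) x y
          - mmult D (mmult D (alpha_star j) B) (alpha_star i) x y
          + mmult D (mmult D B (alpha_star i)) (alpha_star j) x y = 0)
       \<longleftrightarrow> (B x y = 0 \<or> x i = y i \<or> x j = y j)"
      by (simp only: expr prodz)
    thus ?thesis by blast
  qed
  have P2: "(\<forall>x\<in>?H. \<forall>y\<in>?H. x \<noteq> y \<and> \<not> hc_adjacent D x y \<longrightarrow> B x y = 0)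
    \<longleftrightarrow> (\<forall>i j. 1 \<le> i \<and> i < j \<and> j \<le> D \<longrightarrow>
       (\<forall>x\<in>?H. \<forall>y\<in>?H. B x y = 0 \<or> x i = y i \<or> x j = y j))"
  proof
    assume h: "\<forall>x\<in>?H. \<forall>y\<in>?H. x \<noteq> y \<and> \<not> hc_adjacent D x y \<longrightarrow> B x y = 0"
    show "\<forall>i j. 1 \<le> i \<and> i < j \<and> j \<le> D \<longrightarrow>
       (\<forall>x\<in>?H. \<forall>y\<in>?H. B x y = 0 \<or> x i = y i \<or> x j = y j)"
    proof (intro allI impI ballI)
      fix i j x y assume ij: "1 \<le> i \<and> i < j \<and> j \<le> D" and x: "x \<in> ?H" and y: "y \<in> ?H"
      show "B x y = 0 \<or> x i = y i \<or> x j = y j"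
      proof (cases "x i = y i \<or> x j = y j")
        case False
        hence "x \<noteq> y \<and> \<not> hc_adjacent D x y" using key[OF x y] ij by blast
        thus ?thesis using h x y by blast
      qed simp
    qed
  next
    assume h: "\<forall>i j. 1 \<le> i \<and> i < j \<and> j \<le> D \<longrightarrow>
       (\<forall>x\<in>?H. \<forall>y\<in>?H. B x y = 0 \<or> x i = y i \<or> x j = y j)"
    show "\<forall>x\<in>?H. \<forall>y\<in>?H. x \<noteq> y \<and> \<not> hc_adjacent D x y \<longrightarrow> B x y = 0"
    proof (intro ballI impI)
      fix x y assume x: "x \<in> ?H" and y: "y \<in> ?H" and n: "x \<noteq> y \<and> \<not> hc_adjacent D x y"
      then obtain i j where ij: "1 \<le> i \<and> i < j \<and> j \<le> D" "x i \<noteq> y i" "x j \<noteq> y j"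
        using key[OF x y] by blast
      have "B x y = 0 \<or> x i = y i \<or> x j = y j" using h ij(1) x y by blast
      thus "B x y = 0" using ij by blast
    qed
  qed
  show ?thesis unfolding A_like_def P1 P2 by (rule refl)
qed

end
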